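(* Let $U_n\subset C^n([a,b],\mathbb{K})$ ($a<b$) be a subspace of dimension $n+1$ and let $p_{n,0},\dots,p_{n,n}$ be a Bernstein basis of $U_n$ for $\{a,b\}$ which is locally non-negative at $\{a,b\}$. Then there exists $\delta>0$ such that $p_{n,k}'(x)<0$ for all $x\in[b-\delta,b)$ and all $k=0,\dots,n-1$, while $p_{n,k}'(x)>0$ for all $x\in(a,a+\delta]$ and all $k=1,\dots,n$. Consequently, if moreover $f_0\in U_n$ is strictly positive and $D_{f_0}U_n$ has a Bernstein basis $q_{n-1,0},\dots,q_{n-1,n-1}$ for $\{a,b\}$ which is locally non-negative at $\{a,b\}$, then the numbers $$c_k=\frac{1}{f_0(a)}\lim_{x\downarrow a}\frac{p_{n,k}'(x)}{q_{n-1,k-1}(x)}\ (k=1,\dots,n),\qquad d_k=\frac{1}{f_0(b)}\lim_{x\uparrow b}\frac{p_{n,k}'(x)}{q_{n-1,k}(x)}\ (k=0,\dots,n-1)$$ satisfy $c_k>0$ for $k=1,\dots,n$ and $d_k<0$ for $k=0,\dots,n-1$.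
   Context: A function $f\in C^m([a,b],\mathbb{K})$ has a zero of order $k$ at $c$ if $f(c)=\dots=f^{(k-1)}(c)=0$ and $f^{(k)}(c)\ne0$ (one-sided derivatives at endpoints). For an $(m+1)$-dimensional space $V\subset C^m([a,b],\mathbb{K})$, a Bernstein basis for $\{a,b\}$ is a system $p_{m,0},\dots,p_{m,m}$ in $V$ such that each $p_{m,k}$ has a zero of order exactly $k$ at $a$ and of order exactly $m-k$ at $b$. Such a basis is locally non-negative at $\{a,b\}$ if its functions are real-valued and there is $\delta>0$ with $p_{m,k}(x)\ge0$ for all $k$ and all $x\in[a,a+\delta)\cup(b-\delta,b]$. For strictly positive $f_0\in U_n$, $D_{f_0}U_n:=\{\frac{d}{dx}(f/f_0):f\in U_n\}$. (The limits defining $c_k,d_k$ exist and are non-zero.) *)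

theory Defs
  imports "HOL-Analysis.Analysis"
begin

text \<open>Functions on [a,b] are modelled as total functions real => 'a; only their values
  on [a,b] matter.  The field K is modelled by a type 'a :: real_normed_field
  (this covers K = real and K = complex).\<close>

definition has_derivs_on :: "nat \<Rightarrow> real \<Rightarrow> real \<Rightarrow> (real \<Rightarrow> 'a::real_normed_vector)
    \<Rightarrow> (nat \<Rightarrow> real \<Rightarrow> 'a) \<Rightarrow> bool" where
  "has_derivs_on m a b f D \<longleftrightarrow>
     (\<forall>x\<in>{a..b}. D 0 x = f x) \<and>
     (\<forall>j<m. \<forall>x\<in>{a..b}. (D j has_vector_derivative D (Suc j) x) (at x within {a..b})) \<and>
     (\<forall>j\<le>m. continuous_on {a..b} (D j))"

definition Cm_on :: "nat \<Rightarrow> real \<Rightarrow> real \<Rightarrow> (real \<Rightarrow> 'a::real_normed_vector) \<Rightarrow> bool" where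
  "Cm_on m a b f \<longleftrightarrow> (\<exists>D. has_derivs_on m a b f D)"

definition zero_of_order :: "nat \<Rightarrow> real \<Rightarrow> real \<Rightarrow> (real \<Rightarrow> 'a::real_normed_vector)
    \<Rightarrow> real \<Rightarrow> nat \<Rightarrow> bool" where
  "zero_of_order m a b f c k \<longleftrightarrow> k \<le> m \<and>
     (\<exists>D. has_derivs_on m a b f D \<and> (\<forall>j<k. D j c = 0) \<and> D k c \<noteq> 0)"

definition fun_subspace :: "(real \<Rightarrow> 'a::field) set \<Rightarrow> bool" where
  "fun_subspace V \<longleftrightarrow> (\<lambda>x. 0) \<in> V \<and>
     (\<forall>f\<in>V. \<forall>g\<in>V. (\<lambda>x. f x + g x) \<in> V) \<and>
     (\<forall>c. \<forall>f\<in>V. (\<lambda>x. c * f x) \<in> V)"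

definition dim_on :: "real \<Rightarrow> real \<Rightarrow> (real \<Rightarrow> 'a::field) set \<Rightarrow> nat \<Rightarrow> bool" where
  "dim_on a b V d \<longleftrightarrow> (\<exists>B. (\<forall>i<d. B i \<in> V) \<and>
     (\<forall>c. (\<forall>x\<in>{a..b}. (\<Sum>i<d. c i * B i x) = 0) \<longrightarrow> (\<forall>i<d. c i = 0)) \<and>
     (\<forall>f\<in>V. \<exists>c. \<forall>x\<in>{a..b}. f x = (\<Sum>i<d. c i * B i x)))"

definition bernstein_basis :: "nat \<Rightarrow> real \<Rightarrow> real \<Rightarrow> (real \<Rightarrow> 'a::real_normed_vector) set
    \<Rightarrow> (nat \<Rightarrow> real \<Rightarrow> 'a) \<Rightarrow> bool" where
  "bernstein_basis m a b V P \<longleftrightarrow>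
     (\<forall>k\<le>m. P k \<in> V \<and> zero_of_order m a b (P k) a k \<and> zero_of_order m a b (P k) b (m - k))"

definition locally_nonneg :: "nat \<Rightarrow> real \<Rightarrow> real \<Rightarrow> (nat \<Rightarrow> real \<Rightarrow> 'a::real_normed_algebra_1) \<Rightarrow> bool" where
  "locally_nonneg m a b P \<longleftrightarrow>
     (\<forall>k\<le>m. \<forall>x\<in>{a..b}. P k x \<in> \<real>) \<and>
     (\<exists>\<delta>>0. \<forall>k\<le>m. \<forall>x\<in>{a..b}. (x < a + \<delta> \<or> b - \<delta> < x) \<longrightarrow> (\<exists>r\<ge>0. P k x = of_real r))"

definition D_op :: "real \<Rightarrow> real \<Rightarrow> (real \<Rightarrow> real) \<Rightarrow> (real \<Rightarrow> 'a::real_normed_field) set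
    \<Rightarrow> (real \<Rightarrow> 'a) set" where
  "D_op a b f0 U = {g. \<exists>f\<in>U. \<forall>x\<in>{a..b}.
      ((\<lambda>y. f y / of_real (f0 y)) has_vector_derivative g x) (at x within {a..b})}"

end

theory Submission
  imports Defs
begin


definition rp :: "'a::real_normed_algebra_1 \<Rightarrow> real" where "rp z = (SOME r. z = of_real r)"

lemma rp: "z \<in> \<real> \<Longrightarrow> of_real (rp z) = z"
  unfolding rp_def by (metis (mono_tags, lifting) Reals_cases someI_ex)

lemma rp_of_real[simp]: "rp (of_real r :: 'a::real_normed_algebra_1) = r"
  by (metis Reals_of_real of_real_eq_iff rp)

lemma closed_Reals_gen: "closed (\<real> :: 'a::real_normed_algebra_1 set)"
  unfolding closed_sequential_limits
proof (intro allI impI, elim conjE)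
  fix x :: "nat \<Rightarrow> 'a" and l assume x: "\<forall>n. x n \<in> \<real>" and l: "x \<longlonglongrightarrow> l"
  define r where "r n = rp (x n)" for n
  have xr: "x = (\<lambda>n. of_real (r n))" unfolding r_def by (intro ext) (simp add: rp x)
  have "Cauchy x" using l by (rule LIMSEQ_imp_Cauchy)
  hence "Cauchy r" unfolding xr Cauchy_def
    by (metis dist_norm norm_of_real of_real_diff real_norm_def)
  then obtain s where "r \<longlonglongrightarrow> s" using Cauchy_convergent_iff convergent_def by blast
  hence "x \<longlonglongrightarrow> of_real s" unfolding xr by (rule tendsto_of_real)
  hence "l = of_real s" using l LIMSEQ_unique by blast
  thus "l \<in> \<real>" by simp
qed

lemma vd_quot:
  assumes "(f has_vector_derivative v) (at x within S)"
  shows "((\<lambda>y. (f y - f x) /\<^sub>R (y - x)) \<longlongrightarrow> v) (at x within S)"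
proof -
  from assms have "((\<lambda>y. (1 / norm(y - x)) *\<^sub>R (f y - (f x + (y - x) *\<^sub>R v))) \<longlongrightarrow> 0) (at x within S)"
    unfolding has_vector_derivative_def has_derivative_within by auto
  hence "((\<lambda>y. norm ((1 / norm(y - x)) *\<^sub>R (f y - (f x + (y - x) *\<^sub>R v)))) \<longlongrightarrow> 0) (at x within S)"
    using tendsto_norm by fastforce
  moreover have "\<forall>\<^sub>F y in at x within S. norm ((1 / norm(y - x)) *\<^sub>R (f y - (f x + (y - x) *\<^sub>R v)))
      = norm ((f y - f x) /\<^sub>R (y - x) - v)"
  proof (rule eventually_at_filter[THEN iffD2], rule always_eventually, intro allI impI)
    fix y assume "y \<noteq> x"
    hence "(1 / (y - x)) *\<^sub>R (f y - (f x + (y - x) *\<^sub>R v)) = (1 / (y - x)) *\<^sub>R (f y - f x) - (1 / (y - x)) *\<^sub>R ((y - x) *\<^sub>R v)"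
      by (simp add: scaleR_diff_right diff_diff_eq[symmetric])
    also have "\<dots> = (f y - f x) /\<^sub>R (y - x) - v" using \<open>y \<noteq> x\<close> by (simp add: divide_inverse_commute)
    finally have "(f y - f x) /\<^sub>R (y - x) - v = (1 / (y - x)) *\<^sub>R (f y - (f x + (y - x) *\<^sub>R v))" by simp
    thus "norm ((1 / norm(y - x)) *\<^sub>R (f y - (f x + (y - x) *\<^sub>R v))) = norm ((f y - f x) /\<^sub>R (y - x) - v)"
      by simp
  qed
  ultimately have "((\<lambda>y. norm ((f y - f x) /\<^sub>R (y - x) - v)) \<longlongrightarrow> 0) (at x within S)"
    using Lim_transform_eventually by fastforce
  hence "((\<lambda>y. (f y - f x) /\<^sub>R (y - x) - v) \<longlongrightarrow> 0) (at x within S)"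
    by (simp add: tendsto_norm_zero_iff)
  thus ?thesis by (rule LIM_zero_cancel)
qed

lemma ev_within: "(\<And>y. y \<in> S \<Longrightarrow> P y) \<Longrightarrow> eventually P (at x within S)"
  unfolding eventually_at_filter by (auto intro: always_eventually)

lemma deriv_real:
  fixes f :: "real \<Rightarrow> 'a::real_normed_field"
  assumes d: "(f has_vector_derivative v) (at x within {a..b})" and ab: "a < b" and x: "x \<in> {a..b}"
    and fr: "\<forall>y\<in>{a..b}. f y \<in> \<real>"
  shows "v \<in> \<real>"
proof (rule Lim_in_closed_set[OF closed_Reals_gen _ _ vd_quot[OF d]])
  show "\<forall>\<^sub>F y in at x within {a..b}. (f y - f x) /\<^sub>R (y - x) \<in> \<real>"
    using fr x by (auto intro!: ev_within simp: scaleR_conv_of_real)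
  show "at x within {a..b} \<noteq> bot"
    using ab x by (simp add: trivial_limit_within islimpt_Icc)
qed

lemma deriv_rp:
  fixes f :: "real \<Rightarrow> 'a::real_normed_field"
  assumes d: "(f has_vector_derivative v) (at x within {a..b})" and x: "x \<in> {a..b}"
    and fr: "\<forall>y\<in>{a..b}. f y \<in> \<real>" and v: "v \<in> \<real>"
  shows "((\<lambda>y. rp (f y)) has_real_derivative rp v) (at x within {a..b})"
  unfolding has_field_derivative_iff
proof -
  have "((\<lambda>y. of_real ((rp (f y) - rp (f x)) / (y - x)) :: 'a) \<longlongrightarrow> of_real (rp v)) (at x within {a..b})"
  proof (rule Lim_transform_eventually)
    show "((\<lambda>y. (f y - f x) /\<^sub>R (y - x)) \<longlongrightarrow> of_real (rp v)) (at x within {a..b})"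
      using vd_quot[OF d] rp[OF v] by simp
    show "\<forall>\<^sub>F y in at x within {a..b}. (f y - f x) /\<^sub>R (y - x) = of_real ((rp (f y) - rp (f x)) / (y - x))"
    proof (rule ev_within)
      fix y assume "y \<in> {a..b}"
      then show "(f y - f x) /\<^sub>R (y - x) = of_real ((rp (f y) - rp (f x)) / (y - x))"
      proof -
        have "f y \<in> \<real>" "f x \<in> \<real>" using fr x \<open>y \<in> {a..b}\<close> by auto
        hence "f y = of_real (rp (f y))" "f x = of_real (rp (f x))" by (simp_all add: rp)
        hence "(f y - f x) /\<^sub>R (y - x) = of_real (inverse (y - x)) * (of_real (rp (f y)) - of_real (rp (f x)))"
          by (metis scaleR_conv_of_real divide_inverse_commute)
        thus ?thesis by (simp add: divide_inverse mult.commute)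
      qed
    qed
  qed
  thus "((\<lambda>y. (rp (f y) - rp (f x)) / (y - x)) \<longlongrightarrow> rp v) (at x within {a..b})"
    by (simp only: tendsto_of_real_iff)
qed

lemma cont_rp:
  fixes f :: "real \<Rightarrow> 'a::real_normed_field"
  assumes c: "continuous_on S f" and fr: "\<forall>y\<in>S. f y \<in> \<real>"
  shows "continuous_on S (\<lambda>y. rp (f y))"
  unfolding continuous_on_def
proof
  fix x assume x: "x \<in> S"
  have "((\<lambda>y. of_real (rp (f y)) :: 'a) \<longlongrightarrow> of_real (rp (f x))) (at x within S)"
  proof (rule Lim_transform_eventually)
    show "(f \<longlongrightarrow> of_real (rp (f x))) (at x within S)" using c x fr rp[of "f x"] unfolding continuous_on_def by simp
    show "\<forall>\<^sub>F y in at x within S. f y = of_real (rp (f y))"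
      using fr by (auto intro!: ev_within simp: rp)
  qed
  thus "((\<lambda>y. rp (f y)) \<longlongrightarrow> rp (f x)) (at x within S)" by (simp only: tendsto_of_real_iff)
qed

lemma real_chain:
  fixes g :: "real \<Rightarrow> 'a::real_normed_field"
  assumes h: "has_derivs_on m a b g D" and ab: "a < b" and gr: "\<forall>x\<in>{a..b}. g x \<in> \<real>"
  shows "\<forall>j\<le>m. \<forall>x\<in>{a..b}. D j x \<in> \<real>"
proof -
  have "j \<le> m \<Longrightarrow> \<forall>x\<in>{a..b}. D j x \<in> \<real>" for j
  proof (induction j)
    case 0 then show ?case using h gr unfolding has_derivs_on_def by auto
  next
    case (Suc j)
    show ?case
    proof
      fix x assume x: "x \<in> {a..b}"
      have "(D j has_vector_derivative D (Suc j) x) (at x within {a..b})"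
        using h Suc.prems x unfolding has_derivs_on_def by auto
      then show "D (Suc j) x \<in> \<real>" using deriv_real[of "D j" "D (Suc j) x" x a b] ab x Suc by auto
    qed
  qed
  thus ?thesis by blast
qed

lemma real_chain2:
  fixes g :: "real \<Rightarrow> 'a::real_normed_field"
  assumes h: "has_derivs_on m a b g D" and ab: "a < b" and gr: "\<forall>x\<in>{a..b}. g x \<in> \<real>"
  shows "has_derivs_on m a b (\<lambda>x. rp (g x)) (\<lambda>j x. rp (D j x))"
proof -
  note R = real_chain[OF h ab gr]
  show ?thesis unfolding has_derivs_on_def
  proof (intro conjI allI impI ballI)
    fix x assume "x \<in> {a..b}" then show "rp (D 0 x) = rp (g x)" using h unfolding has_derivs_on_def by auto
  next
    fix j x assume j: "j < m" and x: "x \<in> {a..b}"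
    have "(D j has_vector_derivative D (Suc j) x) (at x within {a..b})"
      using h j x unfolding has_derivs_on_def by auto
    from deriv_rp[OF this x] R j x
    show "((\<lambda>x. rp (D j x)) has_vector_derivative rp (D (Suc j) x)) (at x within {a..b})"
      by (simp add: has_real_derivative_iff_has_vector_derivative)
  next
    fix j assume j: "j \<le> m"
    show "continuous_on {a..b} (\<lambda>x. rp (D j x))"
      using cont_rp[of "{a..b}" "D j"] h j R unfolding has_derivs_on_def by auto
  qed
qed



lemma shift_chain: "has_derivs_on (Suc m) a b \<phi> E \<Longrightarrow> has_derivs_on m a b (E 1) (\<lambda>i. E (Suc i))"
  unfolding has_derivs_on_def by auto

lemma chain_deriv_within:
  fixes E :: "nat \<Rightarrow> real \<Rightarrow> real"
  assumes "has_derivs_on m a b \<phi> E" "j < m" "x \<in> {a..b}" "{x..y} \<subseteq> {a..b}"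
  shows "(E j has_derivative (*) (E (Suc j) x)) (at x within {x..y})"
proof -
  have "(E j has_vector_derivative E (Suc j) x) (at x within {a..b})"
    using assms unfolding has_derivs_on_def by auto
  hence "(E j has_derivative (*) (E (Suc j) x)) (at x within {a..b})"
    by (simp add: has_real_derivative_iff_has_vector_derivative[symmetric] has_field_derivative_def)
  thus ?thesis using assms(4) by (rule has_derivative_subset)
qed

lemma chain_deriv_within2:
  fixes E :: "nat \<Rightarrow> real \<Rightarrow> real"
  assumes "has_derivs_on m a b \<phi> E" "j < m" "x \<in> {a..b}" "{y..z} \<subseteq> {a..b}"
  shows "(E j has_derivative (*) (E (Suc j) x)) (at x within {y..z})"
proof -
  have "(E j has_vector_derivative E (Suc j) x) (at x within {a..b})"
    using assms unfolding has_derivs_on_def by auto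
  hence "(E j has_derivative (*) (E (Suc j) x)) (at x within {a..b})"
    by (simp add: has_real_derivative_iff_has_vector_derivative[symmetric] has_field_derivative_def)
  thus ?thesis using assms(4) by (rule has_derivative_subset)
qed

lemma chain_DERIV:
  fixes E :: "nat \<Rightarrow> real \<Rightarrow> real"
  assumes "has_derivs_on m a b \<phi> E" "j < m" "a < x" "x < b"
  shows "DERIV (E j) x :> E (Suc j) x"
proof -
  have "(E j has_vector_derivative E (Suc j) x) (at x within {a..b})"
    using assms unfolding has_derivs_on_def by auto
  moreover have "at x within {a..b} = at x"
    using assms by (intro at_within_interior) auto
  ultimately show ?thesis by (simp add: has_real_derivative_iff_has_vector_derivative)
qed

lemma chain_left:
  fixes E :: "nat \<Rightarrow> real \<Rightarrow> real"
  assumes "has_derivs_on m a b \<phi> E" "a < b" "j \<le> m"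
  shows "(E j \<longlongrightarrow> E j b) (at_left b)"
proof -
  have "continuous_on {a..b} (E j)" using assms unfolding has_derivs_on_def by auto
  hence "(E j \<longlongrightarrow> E j b) (at b within {a..b})" using assms(2) unfolding continuous_on_def by auto
  thus ?thesis using at_within_Icc_at_left[OF assms(2)] by simp
qed

lemma chain_right:
  fixes E :: "nat \<Rightarrow> real \<Rightarrow> real"
  assumes "has_derivs_on m a b \<phi> E" "a < b" "j \<le> m"
  shows "(E j \<longlongrightarrow> E j a) (at_right a)"
proof -
  have "continuous_on {a..b} (E j)" using assms unfolding has_derivs_on_def by auto
  hence "(E j \<longlongrightarrow> E j a) (at a within {a..b})" using assms(2) unfolding continuous_on_def by auto
  thus ?thesis using at_within_Icc_at_right[OF assms(2)] by simp
qed

lemma sign_b: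
  fixes E :: "nat \<Rightarrow> real \<Rightarrow> real"
  assumes "has_derivs_on m a b \<phi> E" "a < b" "j \<le> m" "\<forall>i<j. E i b = 0" "E j b \<noteq> 0"
  shows "\<exists>\<delta>>0. \<delta> < b - a \<and> (\<forall>x. b - \<delta> \<le> x \<and> x < b \<longrightarrow> (-1)^j * E j b * E 0 x > 0)"
  using assms
proof (induction j arbitrary: m \<phi> E)
  case 0
  have "((\<lambda>x. E 0 b * E 0 x) \<longlongrightarrow> E 0 b * E 0 b) (at_left b)"
    by (intro tendsto_mult_left chain_left[OF 0(1,2)]) simp
  moreover have "E 0 b * E 0 b > 0" using 0 not_real_square_gt_zero by blast
  ultimately have "eventually (\<lambda>x. E 0 b * E 0 x > 0) (at_left b)"
    using order_tendstoD(1) by blast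
  then obtain c where c: "c < b" "\<forall>y>c. y < b \<longrightarrow> E 0 b * E 0 y > 0"
    unfolding eventually_at_left_field by blast
  show ?case
  proof (rule exI[of _ "min ((b - c)/2) ((b - a)/2)"], intro conjI allI impI)
    fix x assume "b - min ((b - c) / 2) ((b - a) / 2) \<le> x \<and> x < b"
    moreover have "min ((b - c) / 2) ((b - a) / 2) < b - c" using c(1) by (simp add: min_def)
    ultimately have "x > c" "x < b" by linarith+
    thus "0 < (-1)^0 * E 0 b * E 0 x" using c by simp
  qed (use c 0(2) in \<open>auto simp: min_def\<close>)
next
  case (Suc j)
  then obtain m' where m: "m = Suc m'" by (cases m) auto
  have "\<exists>\<delta>>0. \<delta> < b - a \<and> (\<forall>x. b - \<delta> \<le> x \<and> x < b \<longrightarrow> (-1)^j * E (Suc j) b * E 1 x > 0)"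
    using Suc.IH[OF shift_chain[OF Suc(2)[unfolded m]] Suc(3)] Suc(4-6) m by auto
  then obtain \<delta> where d: "\<delta> > 0" "\<delta> < b - a" "\<forall>x. b - \<delta> \<le> x \<and> x < b \<longrightarrow> (-1)^j * E (Suc j) b * E 1 x > 0"
    by blast
  show ?case
  proof (intro exI[of _ \<delta>] conjI allI impI)
    fix x assume x: "b - \<delta> \<le> x \<and> x < b"
    have "\<exists>\<xi>\<in>{x<..<b}. E 0 b - E 0 x = (*) (E (Suc 0) \<xi>) (b - x)"
    proof (rule mvt_simple)
      show "x < b" using x by simp
      fix t assume "x \<le> t" "t \<le> b"
      then show "(E 0 has_derivative (*) (E (Suc 0) t)) (at t within {x..b})"
        using chain_deriv_within2[OF Suc(2), of 0 t x b] x d m by auto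
    qed
    then obtain \<xi> where xi: "x < \<xi>" "\<xi> < b" "E 0 b - E 0 x = E 1 \<xi> * (b - x)" by (auto simp: One_nat_def)
    have "E 0 b = 0" using Suc(5) by auto
    hence ex: "E 0 x = - (E 1 \<xi> * (b - x))" using xi by simp
    have "(-1)^Suc j * E (Suc j) b * E 0 x = ((-1)^j * E (Suc j) b * E 1 \<xi>) * (b - x)"
      unfolding ex by (simp add: algebra_simps)
    also have "\<dots> > 0" using d(3)[rule_format, of \<xi>] xi x by (rule_tac mult_pos_pos) auto
    finally show "(-1)^Suc j * E (Suc j) b * E 0 x > 0" .
  qed (use d in auto)
qed

lemma sign_a:
  fixes E :: "nat \<Rightarrow> real \<Rightarrow> real"
  assumes "has_derivs_on m a b \<phi> E" "a < b" "j \<le> m" "\<forall>i<j. E i a = 0" "E j a \<noteq> 0"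
  shows "\<exists>\<delta>>0. \<delta> < b - a \<and> (\<forall>x. a < x \<and> x \<le> a + \<delta> \<longrightarrow> E j a * E 0 x > 0)"
  using assms
proof (induction j arbitrary: m \<phi> E)
  case 0
  have "((\<lambda>x. E 0 a * E 0 x) \<longlongrightarrow> E 0 a * E 0 a) (at_right a)"
    by (intro tendsto_mult_left chain_right[OF 0(1,2)]) simp
  moreover have "E 0 a * E 0 a > 0" using 0 not_real_square_gt_zero by blast
  ultimately have "eventually (\<lambda>x. E 0 a * E 0 x > 0) (at_right a)"
    using order_tendstoD(1) by blast
  then obtain c where c: "c > a" "\<forall>y>a. y < c \<longrightarrow> E 0 a * E 0 y > 0"
    unfolding eventually_at_right_field by blast
  show ?case
  proof (rule exI[of _ "min ((c - a)/2) ((b - a)/2)"], intro conjI allI impI)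
    fix x assume "a < x \<and> x \<le> a + min ((c - a) / 2) ((b - a) / 2)"
    moreover have "min ((c - a) / 2) ((b - a) / 2) < c - a" using c(1) by (simp add: min_def)
    ultimately have "x > a" "x < c" by linarith+
    thus "0 < E 0 a * E 0 x" using c by simp
  qed (use c 0(2) in \<open>auto simp: min_def\<close>)
next
  case (Suc j)
  then obtain m' where m: "m = Suc m'" by (cases m) auto
  have "\<exists>\<delta>>0. \<delta> < b - a \<and> (\<forall>x. a < x \<and> x \<le> a + \<delta> \<longrightarrow> E (Suc j) a * E 1 x > 0)"
    using Suc.IH[OF shift_chain[OF Suc(2)[unfolded m]] Suc(3)] Suc(4-6) m by auto
  then obtain \<delta> where d: "\<delta> > 0" "\<delta> < b - a" "\<forall>x. a < x \<and> x \<le> a + \<delta> \<longrightarrow> E (Suc j) a * E 1 x > 0"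
    by blast
  show ?case
  proof (intro exI[of _ \<delta>] conjI allI impI)
    fix x assume x: "a < x \<and> x \<le> a + \<delta>"
    have "\<exists>\<xi>\<in>{a<..<x}. E 0 x - E 0 a = (*) (E (Suc 0) \<xi>) (x - a)"
    proof (rule mvt_simple)
      show "a < x" using x by simp
      fix t assume "a \<le> t" "t \<le> x"
      then show "(E 0 has_derivative (*) (E (Suc 0) t)) (at t within {a..x})"
        using chain_deriv_within2[OF Suc(2), of 0 t a x] x d m by auto
    qed
    then obtain \<xi> where xi: "a < \<xi>" "\<xi> < x" "E 0 x - E 0 a = E 1 \<xi> * (x - a)" by (auto simp: One_nat_def)
    have "E 0 a = 0" using Suc(5) by auto
    hence ex: "E 0 x = E 1 \<xi> * (x - a)" using xi by simp
    have "E (Suc j) a * E 0 x = (E (Suc j) a * E 1 \<xi>) * (x - a)"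
      unfolding ex by (simp add: algebra_simps)
    also have "\<dots> > 0" using d(3)[rule_format, of \<xi>] xi x by (rule_tac mult_pos_pos) auto
    finally show "E (Suc j) a * E 0 x > 0" .
  qed (use d in auto)
qed

lemma ev_left: "(\<delta>::real) > 0 \<Longrightarrow> (\<forall>x. b - \<delta> \<le> x \<and> x < b \<longrightarrow> P x) \<Longrightarrow> eventually P (at_left b)"
  unfolding eventually_at_left_field by (rule exI[of _ "b - \<delta>"]) auto

lemma ev_right: "(\<delta>::real) > 0 \<Longrightarrow> (\<forall>x. a < x \<and> x \<le> a + \<delta> \<longrightarrow> P x) \<Longrightarrow> eventually P (at_right a)"
  unfolding eventually_at_right_field by (rule exI[of _ "a + \<delta>"]) auto

lemma ratio_b:
  fixes E F :: "nat \<Rightarrow> real \<Rightarrow> real"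
  assumes "has_derivs_on m a b \<phi> E" "has_derivs_on m a b \<psi> F" "a < b" "j \<le> m"
    "\<forall>i<j. E i b = 0" "\<forall>i<j. F i b = 0" "F j b \<noteq> 0"
  shows "((\<lambda>x. E 0 x / F 0 x) \<longlongrightarrow> E j b / F j b) (at_left b)"
  using assms
proof (induction j arbitrary: m \<phi> \<psi> E F)
  case 0
  then show ?case by (intro tendsto_divide chain_left) auto
next
  case (Suc j)
  then obtain m' where m: "m = Suc m'" by (cases m) auto
  have IH: "((\<lambda>x. E (Suc 0) x / F (Suc 0) x) \<longlongrightarrow> E (Suc j) b / F (Suc j) b) (at_left b)"
    using Suc.IH[OF shift_chain[OF Suc(2)[unfolded m]] shift_chain[OF Suc(3)[unfolded m]] Suc(4)]
      Suc(5-8) m by (auto simp: One_nat_def)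
  have inner: "eventually (\<lambda>x. a < x \<and> x < b) (at_left b)"
    using eventually_at_left_real[OF Suc(4)] by simp
  show ?case
  proof (rule lhopital_left[where f'="E (Suc 0)" and g'="F (Suc 0)", OF _ _ _ _ _ _ IH])
    show "(E 0 \<longlongrightarrow> 0) (at_left b)" using chain_left[OF Suc(2,4), of 0] Suc(6) by auto
    show "(F 0 \<longlongrightarrow> 0) (at_left b)" using chain_left[OF Suc(3,4), of 0] Suc(7) by auto
    obtain \<delta> where "\<delta> > 0" "\<forall>x. b - \<delta> \<le> x \<and> x < b \<longrightarrow> (-1)^Suc j * F (Suc j) b * F 0 x > 0"
      using sign_b[OF Suc(3,4,5,7,8)] by blast
    then show "eventually (\<lambda>x. F 0 x \<noteq> 0) (at_left b)"
      by (intro ev_left[of \<delta>]) (simp, metis mult_zero_right less_irrefl)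
    have "\<exists>\<delta>>0. \<delta> < b - a \<and> (\<forall>x. b - \<delta> \<le> x \<and> x < b \<longrightarrow> (-1)^j * F (Suc j) b * F (Suc 0) x > 0)"
      using sign_b[OF shift_chain[OF Suc(3)[unfolded m]] Suc(4), of j] Suc(5,7,8) m by auto
    then obtain \<delta>' where "\<delta>' > 0" "\<forall>x. b - \<delta>' \<le> x \<and> x < b \<longrightarrow> (-1)^j * F (Suc j) b * F (Suc 0) x > 0"
      by blast
    then show "eventually (\<lambda>x. F (Suc 0) x \<noteq> 0) (at_left b)"
      by (intro ev_left[of \<delta>']) (simp, metis mult_zero_right less_irrefl)
    show "eventually (\<lambda>x. DERIV (E 0) x :> E (Suc 0) x) (at_left b)"
      using inner by eventually_elim (use chain_DERIV[OF Suc(2), of 0] m in auto)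
    show "eventually (\<lambda>x. DERIV (F 0) x :> F (Suc 0) x) (at_left b)"
      using inner by eventually_elim (use chain_DERIV[OF Suc(3), of 0] m in auto)
  qed
qed

lemma ratio_a:
  fixes E F :: "nat \<Rightarrow> real \<Rightarrow> real"
  assumes "has_derivs_on m a b \<phi> E" "has_derivs_on m a b \<psi> F" "a < b" "j \<le> m"
    "\<forall>i<j. E i a = 0" "\<forall>i<j. F i a = 0" "F j a \<noteq> 0"
  shows "((\<lambda>x. E 0 x / F 0 x) \<longlongrightarrow> E j a / F j a) (at_right a)"
  using assms
proof (induction j arbitrary: m \<phi> \<psi> E F)
  case 0
  then show ?case by (intro tendsto_divide chain_right) auto
next
  case (Suc j)
  then obtain m' where m: "m = Suc m'" by (cases m) auto
  have IH: "((\<lambda>x. E (Suc 0) x / F (Suc 0) x) \<longlongrightarrow> E (Suc j) a / F (Suc j) a) (at_right a)"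
    using Suc.IH[OF shift_chain[OF Suc(2)[unfolded m]] shift_chain[OF Suc(3)[unfolded m]] Suc(4)]
      Suc(5-8) m by (auto simp: One_nat_def)
  have inner: "eventually (\<lambda>x. a < x \<and> x < b) (at_right a)"
    using eventually_at_right_real[OF Suc(4)] by simp
  show ?case
  proof (rule lhopital_right[where f'="E (Suc 0)" and g'="F (Suc 0)", OF _ _ _ _ _ _ IH])
    show "(E 0 \<longlongrightarrow> 0) (at_right a)" using chain_right[OF Suc(2,4), of 0] Suc(6) by auto
    show "(F 0 \<longlongrightarrow> 0) (at_right a)" using chain_right[OF Suc(3,4), of 0] Suc(7) by auto
    obtain \<delta> where "\<delta> > 0" "\<forall>x. a < x \<and> x \<le> a + \<delta> \<longrightarrow> F (Suc j) a * F 0 x > 0"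
      using sign_a[OF Suc(3,4,5,7,8)] by blast
    then show "eventually (\<lambda>x. F 0 x \<noteq> 0) (at_right a)"
      by (intro ev_right[of \<delta>]) (simp, metis mult_zero_right less_irrefl)
    have "\<exists>\<delta>>0. \<delta> < b - a \<and> (\<forall>x. a < x \<and> x \<le> a + \<delta> \<longrightarrow> F (Suc j) a * F (Suc 0) x > 0)"
      using sign_a[OF shift_chain[OF Suc(3)[unfolded m]] Suc(4), of j] Suc(5,7,8) m by auto
    then obtain \<delta>' where "\<delta>' > 0" "\<forall>x. a < x \<and> x \<le> a + \<delta>' \<longrightarrow> F (Suc j) a * F (Suc 0) x > 0"
      by blast
    then show "eventually (\<lambda>x. F (Suc 0) x \<noteq> 0) (at_right a)"
      by (intro ev_right[of \<delta>']) (simp, metis mult_zero_right less_irrefl)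
    show "eventually (\<lambda>x. DERIV (E 0) x :> E (Suc 0) x) (at_right a)"
      using inner by eventually_elim (use chain_DERIV[OF Suc(2), of 0] m in auto)
    show "eventually (\<lambda>x. DERIV (F 0) x :> F (Suc 0) x) (at_right a)"
      using inner by eventually_elim (use chain_DERIV[OF Suc(3), of 0] m in auto)
  qed
qed



lemma rp_0[simp]: "rp (0::'a::real_normed_algebra_1) = 0"
  by (metis rp_of_real of_real_0)

lemma endsign_b:
  fixes E :: "nat \<Rightarrow> real \<Rightarrow> real"
  assumes "has_derivs_on m a b \<phi> E" "a < b" "j \<le> m" "\<forall>i<j. E i b = 0" "E j b \<noteq> 0"
    "\<delta>0 > 0" "\<forall>x\<in>{a..b}. b - \<delta>0 < x \<longrightarrow> E 0 x \<ge> 0"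
  shows "(-1)^j * E j b > 0"
proof -
  obtain \<delta> where d: "\<delta> > 0" "\<delta> < b - a" "\<forall>x. b - \<delta> \<le> x \<and> x < b \<longrightarrow> (-1)^j * E j b * E 0 x > 0"
    using sign_b[OF assms(1-5)] by blast
  define x where "x = b - min \<delta>0 \<delta> / 2"
  have x: "b - \<delta> \<le> x" "x < b" "x \<in> {a..b}" "b - \<delta>0 < x" using d assms(6) unfolding x_def by (auto simp: min_def)
  have "(-1)^j * E j b * E 0 x > 0" "E 0 x \<ge> 0" using d(3) x assms(7) by auto
  thus ?thesis by (metis zero_less_mult_iff linorder_not_less order_le_less)
qed

lemma endsign_a:
  fixes E :: "nat \<Rightarrow> real \<Rightarrow> real"
  assumes "has_derivs_on m a b \<phi> E" "a < b" "j \<le> m" "\<forall>i<j. E i a = 0" "E j a \<noteq> 0"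
    "\<delta>0 > 0" "\<forall>x\<in>{a..b}. x < a + \<delta>0 \<longrightarrow> E 0 x \<ge> 0"
  shows "E j a > 0"
proof -
  obtain \<delta> where d: "\<delta> > 0" "\<delta> < b - a" "\<forall>x. a < x \<and> x \<le> a + \<delta> \<longrightarrow> E j a * E 0 x > 0"
    using sign_a[OF assms(1-5)] by blast
  define x where "x = a + min \<delta>0 \<delta> / 2"
  have x: "a < x" "x \<le> a + \<delta>" "x \<in> {a..b}" "x < a + \<delta>0" using d assms(6) unfolding x_def by (auto simp: min_def)
  have "E j a * E 0 x > 0" "E 0 x \<ge> 0" using d(3) x assms(7) by auto
  thus ?thesis by (metis zero_less_mult_iff linorder_not_less order_le_less)
qed

lemma real_zero_order:
  fixes g :: "real \<Rightarrow> 'a::real_normed_field"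
  assumes z: "zero_of_order m a b g c r" and ab: "a < b" and gr: "\<forall>x\<in>{a..b}. g x \<in> \<real>"
    and c: "c \<in> {a..b}"
  shows "\<exists>D E. has_derivs_on m a b g D \<and> has_derivs_on m a b (\<lambda>x. rp (g x)) E \<and> r \<le> m \<and>
     (\<forall>j\<le>m. \<forall>x\<in>{a..b}. D j x = of_real (E j x)) \<and> (\<forall>j<r. E j c = 0) \<and> E r c \<noteq> 0"
proof -
  obtain D where D: "has_derivs_on m a b g D" "\<forall>j<r. D j c = 0" "D r c \<noteq> 0" "r \<le> m"
    using z unfolding zero_of_order_def by blast
  note R = real_chain[OF D(1) ab gr]
  show ?thesis
  proof (intro exI conjI)
    show "has_derivs_on m a b (\<lambda>x. rp (g x)) (\<lambda>j x. rp (D j x))" by (rule real_chain2[OF D(1) ab gr])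
    show "\<forall>j\<le>m. \<forall>x\<in>{a..b}. D j x = of_real (rp (D j x))" using R by (simp add: rp)
    show "\<forall>j<r. rp (D j c) = 0" using D by simp
    show "rp (D r c) \<noteq> 0" using D R c by (metis rp of_real_0)
  qed (use D in auto)
qed

lemma chain_vd_within:
  fixes g :: "real \<Rightarrow> 'a::real_normed_vector"
  assumes "has_derivs_on m a b g D" "0 < m" "x \<in> {a..b}"
  shows "(g has_vector_derivative D 1 x) (at x within {a..b})"
proof (rule has_vector_derivative_transform_within[where d=1])
  show "(D 0 has_vector_derivative D 1 x) (at x within {a..b})"
    using assms unfolding has_derivs_on_def by (auto simp: One_nat_def)
  show "\<And>x'. x' \<in> {a..b} \<Longrightarrow> dist x' x < 1 \<Longrightarrow> D 0 x' = g x'"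
    using assms unfolding has_derivs_on_def by auto
qed (use assms in auto)

lemma chain_vd_at:
  fixes g :: "real \<Rightarrow> 'a::real_normed_vector"
  assumes "has_derivs_on m a b g D" "0 < m" "a < x" "x < b"
  shows "vector_derivative g (at x) = D 1 x"
proof -
  have "at x within {a..b} = at x"
    using assms by (intro at_within_interior) auto
  thus ?thesis using chain_vd_within[OF assms(1,2), of x] assms by (auto intro: vector_derivative_at)
qed



lemma neg_mult: "(u::real) < 0 \<Longrightarrow> u * v > 0 \<Longrightarrow> v < 0"
  by (simp add: zero_less_mult_iff)

lemma sgn_helper: "(-1::real)^Suc j * e > 0 \<Longrightarrow> (-1)^j * g > 0 \<Longrightarrow> e / g < 0"
  by (cases "even j") (auto simp: divide_less_0_iff zero_less_mult_iff)

theorem lemma6: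
  fixes a b :: real and n :: nat
    and U :: "(real \<Rightarrow> 'a::real_normed_field) set"
    and P :: "nat \<Rightarrow> real \<Rightarrow> 'a"
  assumes ab: "a < b"
    and U_Cn: "\<forall>f\<in>U. Cm_on n a b f"
    and U_sub: "fun_subspace U"
    and U_dim: "dim_on a b U (n + 1)"
    and P_bern: "bernstein_basis n a b U P"
    and P_nonneg: "locally_nonneg n a b P"
  shows "(\<exists>\<delta>>0.
            (\<forall>k<n. \<forall>x\<in>{a..b}. b - \<delta> \<le> x \<and> x < b \<longrightarrow>
               (\<exists>d::real. (P k has_vector_derivative of_real d) (at x within {a..b}) \<and> d < 0)) \<and>
            (\<forall>k\<in>{1..n}. \<forall>x\<in>{a..b}. a < x \<and> x \<le> a + \<delta> \<longrightarrow>
               (\<exists>d::real. (P k has_vector_derivative of_real d) (at x within {a..b}) \<and> d > 0)))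
       \<and> (\<forall>(f0::real \<Rightarrow> real) (Q::nat \<Rightarrow> real \<Rightarrow> 'a).
            (\<lambda>x. of_real (f0 x)) \<in> U \<and> (\<forall>x\<in>{a..b}. f0 x > 0) \<and>
            bernstein_basis (n - 1) a b (D_op a b f0 U) Q \<and> locally_nonneg (n - 1) a b Q
            \<longrightarrow>
            (\<forall>k\<in>{1..n}. \<exists>L::real.
               ((\<lambda>x. vector_derivative (P k) (at x) / Q (k - 1) x) \<longlongrightarrow> of_real L) (at_right a)
               \<and> L / f0 a > 0) \<and>
            (\<forall>k<n. \<exists>L::real.
               ((\<lambda>x. vector_derivative (P k) (at x) / Q k x) \<longlongrightarrow> of_real L) (at_left b)
               \<and> L / f0 b < 0))"
proof -
  from P_nonneg obtain \<delta>0 where Preal: "\<forall>k\<le>n. \<forall>x\<in>{a..b}. P k x \<in> \<real>" and d0: "\<delta>0 > 0"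
    and Pnn0: "\<forall>k\<le>n. \<forall>x\<in>{a..b}. (x < a + \<delta>0 \<or> b - \<delta>0 < x) \<longrightarrow> (\<exists>r\<ge>0. P k x = of_real r)"
    unfolding locally_nonneg_def by blast
  have Pnn: "rp (P k x) \<ge> 0" if "k \<le> n" "x \<in> {a..b}" "x < a + \<delta>0 \<or> b - \<delta>0 < x" for k x
    using Pnn0 that by force
  have B1: "eventually (\<lambda>x. x \<in> {a..b} \<longrightarrow> (\<exists>d::real. (P k has_vector_derivative of_real d) (at x within {a..b}) \<and> d < 0)) (at_left b)"
    if k: "k < n" for k
  proof -
    obtain n' where n: "n = Suc n'" using k by (cases n) auto
    obtain D E where DE: "has_derivs_on n a b (P k) D" "has_derivs_on n a b (\<lambda>x. rp (P k x)) E"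
      "\<forall>j\<le>n. \<forall>x\<in>{a..b}. D j x = of_real (E j x)" "\<forall>j<n-k. E j b = 0" "E (n-k) b \<noteq> 0"
      using real_zero_order[of n a b "P k" b "n-k"] P_bern k Preal ab unfolding bernstein_basis_def by auto
    have E0: "E 0 x = rp (P k x)" if "x \<in> {a..b}" for x using DE(2) that unfolding has_derivs_on_def by auto
    have pos: "(-1)^(n-k) * E (n-k) b > 0"
      by (rule endsign_b[OF DE(2) ab _ DE(4,5) d0]) (use E0 Pnn k in auto)
    obtain \<delta> where d: "\<delta> > 0" "\<forall>x. b - \<delta> \<le> x \<and> x < b \<longrightarrow> (-1)^(n-k-1) * E (Suc (n-k-1)) b * E (Suc 0) x > 0"
    proof -
      have nk: "Suc (n-k-1) = n - k" using k by simp
      have c1: "\<forall>i<n-k-1. E (Suc i) b = 0" using DE(4) by auto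
      have c2: "E (Suc (n-k-1)) b \<noteq> 0" using DE(5) nk by simp
      have c3: "n-k-1 \<le> n'" using n by simp
      show ?thesis using sign_b[OF shift_chain[OF DE(2)[unfolded n]] ab c3] c1 c2 that by auto
    qed
    have nk: "Suc (n-k-1) = n - k" using k by simp
    show ?thesis
    proof (rule ev_left[OF d(1)], intro allI impI)
      fix x assume x: "b - \<delta> \<le> x \<and> x < b" "x \<in> {a..b}"
      have s: "(-1)^(n-k-1) * E (n-k) b * E (Suc 0) x > 0" using d(2) x nk by simp
      have "(-1)^(n-k) * E (n-k) b = - ((-1)^(n-k-1) * E (n-k) b)" using nk[symmetric] by simp
      hence "(-1)^(n-k-1) * E (n-k) b < 0" using pos by simp
      hence neg: "E (Suc 0) x < 0" using s neg_mult by blast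
      have "(P k has_vector_derivative D 1 x) (at x within {a..b})"
        using chain_vd_within[OF DE(1) _ x(2)] n by simp
      moreover have "D 1 x = of_real (E (Suc 0) x)" using DE(3) x n by simp
      ultimately show "\<exists>d::real. (P k has_vector_derivative of_real d) (at x within {a..b}) \<and> d < 0"
        using neg by auto
    qed
  qed
  have A1: "eventually (\<lambda>x. x \<in> {a..b} \<longrightarrow> (\<exists>d::real. (P k has_vector_derivative of_real d) (at x within {a..b}) \<and> d > 0)) (at_right a)"
    if k: "k \<in> {1..n}" for k
  proof -
    obtain n' where n: "n = Suc n'" using k by (cases n) auto
    obtain D E where DE: "has_derivs_on n a b (P k) D" "has_derivs_on n a b (\<lambda>x. rp (P k x)) E"
      "\<forall>j\<le>n. \<forall>x\<in>{a..b}. D j x = of_real (E j x)" "\<forall>j<k. E j a = 0" "E k a \<noteq> 0"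
      using real_zero_order[of n a b "P k" a k] P_bern k Preal ab unfolding bernstein_basis_def by auto
    have E0: "E 0 x = rp (P k x)" if "x \<in> {a..b}" for x using DE(2) that unfolding has_derivs_on_def by auto
    have pos: "E k a > 0"
      by (rule endsign_a[OF DE(2) ab _ DE(4,5) d0]) (use E0 Pnn k in auto)
    obtain \<delta> where d: "\<delta> > 0" "\<forall>x. a < x \<and> x \<le> a + \<delta> \<longrightarrow> E (Suc (k-1)) a * E (Suc 0) x > 0"
    proof -
      have c3: "k-1 \<le> n'" using n k by auto
      show ?thesis using sign_a[OF shift_chain[OF DE(2)[unfolded n]] ab c3] DE(4,5) k that by auto
    qed
    have kk: "Suc (k-1) = k" using k by simp
    show ?thesis
    proof (rule ev_right[OF d(1)], intro allI impI)
      fix x assume x: "a < x \<and> x \<le> a + \<delta>" "x \<in> {a..b}"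
      have s: "E k a * E (Suc 0) x > 0" using d(2) x kk by metis
      hence ps: "E (Suc 0) x > 0" using pos by (simp add: zero_less_mult_iff)
      have "(P k has_vector_derivative D 1 x) (at x within {a..b})"
        using chain_vd_within[OF DE(1) _ x(2)] n by simp
      moreover have "D 1 x = of_real (E (Suc 0) x)" using DE(3) x n by simp
      ultimately show "\<exists>d::real. (P k has_vector_derivative of_real d) (at x within {a..b}) \<and> d > 0"
        using ps by auto
    qed
  qed
  have part1: "\<exists>\<delta>>0.
            (\<forall>k<n. \<forall>x\<in>{a..b}. b - \<delta> \<le> x \<and> x < b \<longrightarrow>
               (\<exists>d::real. (P k has_vector_derivative of_real d) (at x within {a..b}) \<and> d < 0)) \<and>
            (\<forall>k\<in>{1..n}. \<forall>x\<in>{a..b}. a < x \<and> x \<le> a + \<delta> \<longrightarrow>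
               (\<exists>d::real. (P k has_vector_derivative of_real d) (at x within {a..b}) \<and> d > 0))"
  proof -
    have "eventually (\<lambda>x. \<forall>k\<in>{..<n}. x \<in> {a..b} \<longrightarrow> (\<exists>d::real. (P k has_vector_derivative of_real d) (at x within {a..b}) \<and> d < 0)) (at_left b)"
      by (rule eventually_ball_finite) (use B1 in auto)
    then obtain c where c: "c < b" "\<forall>y>c. y < b \<longrightarrow> (\<forall>k\<in>{..<n}. y \<in> {a..b} \<longrightarrow> (\<exists>d::real. (P k has_vector_derivative of_real d) (at y within {a..b}) \<and> d < 0))"
      unfolding eventually_at_left_field by blast
    have "eventually (\<lambda>x. \<forall>k\<in>{1..n}. x \<in> {a..b} \<longrightarrow> (\<exists>d::real. (P k has_vector_derivative of_real d) (at x within {a..b}) \<and> d > 0)) (at_right a)"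
      by (rule eventually_ball_finite) (use A1 in auto)
    then obtain c' where c': "c' > a" "\<forall>y>a. y < c' \<longrightarrow> (\<forall>k\<in>{1..n}. y \<in> {a..b} \<longrightarrow> (\<exists>d::real. (P k has_vector_derivative of_real d) (at y within {a..b}) \<and> d > 0))"
      unfolding eventually_at_right_field by blast
    define \<delta> where "\<delta> = min (b - c) (c' - a) / 2"
    have dp: "\<delta> > 0" "\<delta> < b - c" "\<delta> < c' - a" using c c' unfolding \<delta>_def by (auto simp: min_def)
    show ?thesis
    proof (rule exI[of _ \<delta>], intro conjI allI impI ballI)
      fix k x assume "k < n" "x \<in> {a..b}" "b - \<delta> \<le> x \<and> x < b"
      then show "\<exists>d::real. (P k has_vector_derivative of_real d) (at x within {a..b}) \<and> d < 0"
        using c(2) dp by auto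
    next
      fix k x assume "k \<in> {1..n}" "x \<in> {a..b}" "a < x \<and> x \<le> a + \<delta>"
      then show "\<exists>d::real. (P k has_vector_derivative of_real d) (at x within {a..b}) \<and> d > 0"
        using c'(2) dp by auto
    qed (use dp in auto)
  qed
  have part2: "\<forall>(f0::real \<Rightarrow> real) (Q::nat \<Rightarrow> real \<Rightarrow> 'a).
            (\<lambda>x. of_real (f0 x)) \<in> U \<and> (\<forall>x\<in>{a..b}. f0 x > 0) \<and>
            bernstein_basis (n - 1) a b (D_op a b f0 U) Q \<and> locally_nonneg (n - 1) a b Q
            \<longrightarrow>
            (\<forall>k\<in>{1..n}. \<exists>L::real.
               ((\<lambda>x. vector_derivative (P k) (at x) / Q (k - 1) x) \<longlongrightarrow> of_real L) (at_right a)
               \<and> L / f0 a > 0) \<and>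
            (\<forall>k<n. \<exists>L::real.
               ((\<lambda>x. vector_derivative (P k) (at x) / Q k x) \<longlongrightarrow> of_real L) (at_left b)
               \<and> L / f0 b < 0)"
  proof (intro allI impI, elim conjE)
    fix f0 :: "real \<Rightarrow> real" and Q :: "nat \<Rightarrow> real \<Rightarrow> 'a"
    assume f0pos: "\<forall>x\<in>{a..b}. f0 x > 0" and Qb: "bernstein_basis (n - 1) a b (D_op a b f0 U) Q"
      and Qn: "locally_nonneg (n - 1) a b Q"
    from Qn obtain \<delta>1 where Qreal: "\<forall>k\<le>n-1. \<forall>x\<in>{a..b}. Q k x \<in> \<real>" and d1: "\<delta>1 > 0"
      and Qnn0: "\<forall>k\<le>n-1. \<forall>x\<in>{a..b}. (x < a + \<delta>1 \<or> b - \<delta>1 < x) \<longrightarrow> (\<exists>r\<ge>0. Q k x = of_real r)"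
      unfolding locally_nonneg_def by blast
    have Qnn: "rp (Q k x) \<ge> 0" if "k \<le> n-1" "x \<in> {a..b}" "x < a + \<delta>1 \<or> b - \<delta>1 < x" for k x
      using Qnn0 that by force
    have fa: "f0 a > 0" "f0 b > 0" using f0pos ab by auto
    have inner_a: "eventually (\<lambda>x. a < x \<and> x < b) (at_right a)"
      using eventually_at_right_real[OF ab] by simp
    have inner_b: "eventually (\<lambda>x. a < x \<and> x < b) (at_left b)"
      using eventually_at_left_real[OF ab] by simp
    show "(\<forall>k\<in>{1..n}. \<exists>L::real.
               ((\<lambda>x. vector_derivative (P k) (at x) / Q (k - 1) x) \<longlongrightarrow> of_real L) (at_right a)
               \<and> L / f0 a > 0) \<and>
            (\<forall>k<n. \<exists>L::real.
               ((\<lambda>x. vector_derivative (P k) (at x) / Q k x) \<longlongrightarrow> of_real L) (at_left b)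
               \<and> L / f0 b < 0)"
    proof (intro conjI ballI allI impI)
      fix k assume k: "k \<in> {1..n}"
      obtain n' where n: "n = Suc n'" using k by (cases n) auto
      obtain D E where DE: "has_derivs_on n a b (P k) D" "has_derivs_on n a b (\<lambda>x. rp (P k x)) E"
        "\<forall>j\<le>n. \<forall>x\<in>{a..b}. D j x = of_real (E j x)" "\<forall>j<k. E j a = 0" "E k a \<noteq> 0"
        using real_zero_order[of n a b "P k" a k] P_bern k Preal ab unfolding bernstein_basis_def by auto
      have E0: "E 0 x = rp (P k x)" if "x \<in> {a..b}" for x using DE(2) that unfolding has_derivs_on_def by auto
      have pos: "E k a > 0"
        by (rule endsign_a[OF DE(2) ab _ DE(4,5) d0]) (use E0 Pnn k in auto)
      have k1: "k - 1 \<le> n'" using k n by auto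
      obtain DQ G where DQ: "has_derivs_on n' a b (Q (k-1)) DQ" "has_derivs_on n' a b (\<lambda>x. rp (Q (k-1) x)) G"
        "\<forall>j\<le>n'. \<forall>x\<in>{a..b}. DQ j x = of_real (G j x)" "\<forall>j<k-1. G j a = 0" "G (k-1) a \<noteq> 0"
        using real_zero_order[of n' a b "Q (k-1)" a "k-1"] Qb k1 Qreal ab n unfolding bernstein_basis_def by auto
      have G0: "G 0 x = rp (Q (k-1) x)" if "x \<in> {a..b}" for x using DQ(2) that unfolding has_derivs_on_def by auto
      have posG: "G (k-1) a > 0"
        by (rule endsign_a[OF DQ(2) ab k1 DQ(4,5) d1]) (use G0 Qnn k n in auto)
      have lim: "((\<lambda>x. E (Suc 0) x / G 0 x) \<longlongrightarrow> E (Suc (k-1)) a / G (k-1) a) (at_right a)"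
        using ratio_a[OF shift_chain[OF DE(2)[unfolded n]] DQ(2) ab k1] DE(4) DQ(4,5) k by auto
      have kk: "Suc (k-1) = k" using k by simp
      show "\<exists>L::real. ((\<lambda>x. vector_derivative (P k) (at x) / Q (k - 1) x) \<longlongrightarrow> of_real L) (at_right a)
               \<and> L / f0 a > 0"
      proof (intro exI conjI)
        show "((\<lambda>x. vector_derivative (P k) (at x) / Q (k - 1) x) \<longlongrightarrow> of_real (E k a / G (k-1) a)) (at_right a)"
        proof (rule Lim_transform_eventually)
          show "((\<lambda>x. of_real (E (Suc 0) x / G 0 x) :: 'a) \<longlongrightarrow> of_real (E k a / G (k-1) a)) (at_right a)"
            using tendsto_of_real[OF lim] unfolding kk .
          show "\<forall>\<^sub>F x in at_right a. (of_real (E (Suc 0) x / G 0 x) :: 'a) = vector_derivative (P k) (at x) / Q (k - 1) x"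
            using inner_a
          proof eventually_elim
            case (elim x)
            have "vector_derivative (P k) (at x) = D 1 x" using chain_vd_at[OF DE(1) _ elim[THEN conjunct1] elim[THEN conjunct2]] n by simp
            also have "\<dots> = of_real (E (Suc 0) x)" using DE(3) elim n by simp
            finally have 1: "vector_derivative (P k) (at x) = of_real (E (Suc 0) x)" .
            have "Q (k-1) x = DQ 0 x" using DQ(1) elim unfolding has_derivs_on_def by auto
            also have "\<dots> = of_real (G 0 x)" using DQ(3) elim by simp
            finally show ?case using 1 by (simp add: of_real_divide)
          qed
        qed
        show "E k a / G (k-1) a / f0 a > 0" using pos posG fa by simp
      qed
    next
      fix k assume k: "k < n"
      obtain n' where n: "n = Suc n'" using k by (cases n) auto
      obtain D E where DE: "has_derivs_on n a b (P k) D" "has_derivs_on n a b (\<lambda>x. rp (P k x)) E"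
        "\<forall>j\<le>n. \<forall>x\<in>{a..b}. D j x = of_real (E j x)" "\<forall>j<n-k. E j b = 0" "E (n-k) b \<noteq> 0"
        using real_zero_order[of n a b "P k" b "n-k"] P_bern k Preal ab unfolding bernstein_basis_def by auto
      have E0: "E 0 x = rp (P k x)" if "x \<in> {a..b}" for x using DE(2) that unfolding has_derivs_on_def by auto
      have pos: "(-1)^(n-k) * E (n-k) b > 0"
        by (rule endsign_b[OF DE(2) ab _ DE(4,5) d0]) (use E0 Pnn k in auto)
      have k1: "n' - k \<le> n'" "k \<le> n - 1" using k n by auto
      obtain DQ G where DQ: "has_derivs_on n' a b (Q k) DQ" "has_derivs_on n' a b (\<lambda>x. rp (Q k x)) G"
        "\<forall>j\<le>n'. \<forall>x\<in>{a..b}. DQ j x = of_real (G j x)" "\<forall>j<n'-k. G j b = 0" "G (n'-k) b \<noteq> 0"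
        using real_zero_order[of n' a b "Q k" b "n'-k"] Qb k1 Qreal ab n unfolding bernstein_basis_def by auto
      have G0: "G 0 x = rp (Q k x)" if "x \<in> {a..b}" for x using DQ(2) that unfolding has_derivs_on_def by auto
      have posG: "(-1)^(n'-k) * G (n'-k) b > 0"
        by (rule endsign_b[OF DQ(2) ab k1(1) DQ(4,5) d1]) (use G0 Qnn k1 in auto)
      have nk: "Suc (n'-k) = n - k" using k n by simp
      have c1: "\<forall>i<n'-k. E (Suc i) b = 0" using DE(4) nk by auto
      have lim: "((\<lambda>x. E (Suc 0) x / G 0 x) \<longlongrightarrow> E (Suc (n'-k)) b / G (n'-k) b) (at_left b)"
        using ratio_b[OF shift_chain[OF DE(2)[unfolded n]] DQ(2) ab k1(1)] c1 DQ(4,5) by auto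
      show "\<exists>L::real. ((\<lambda>x. vector_derivative (P k) (at x) / Q k x) \<longlongrightarrow> of_real L) (at_left b)
               \<and> L / f0 b < 0"
      proof (intro exI conjI)
        show "((\<lambda>x. vector_derivative (P k) (at x) / Q k x) \<longlongrightarrow> of_real (E (n-k) b / G (n'-k) b)) (at_left b)"
        proof (rule Lim_transform_eventually)
          show "((\<lambda>x. of_real (E (Suc 0) x / G 0 x) :: 'a) \<longlongrightarrow> of_real (E (n-k) b / G (n'-k) b)) (at_left b)"
            using tendsto_of_real[OF lim] unfolding nk .
          show "\<forall>\<^sub>F x in at_left b. (of_real (E (Suc 0) x / G 0 x) :: 'a) = vector_derivative (P k) (at x) / Q k x"
            using inner_b
          proof eventually_elim
            case (elim x)
            have "vector_derivative (P k) (at x) = D 1 x" using chain_vd_at[OF DE(1) _ elim[THEN conjunct1] elim[THEN conjunct2]] n by simp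
            also have "\<dots> = of_real (E (Suc 0) x)" using DE(3) elim n by simp
            finally have 1: "vector_derivative (P k) (at x) = of_real (E (Suc 0) x)" .
            have "Q k x = DQ 0 x" using DQ(1) elim unfolding has_derivs_on_def by auto
            also have "\<dots> = of_real (G 0 x)" using DQ(3) elim by simp
            finally show ?case using 1 by (simp add: of_real_divide)
          qed
        qed
        have "E (n-k) b / G (n'-k) b < 0" using sgn_helper[of "n'-k" "E (n-k) b" "G (n'-k) b"] pos posG nk by simp
        thus "E (n-k) b / G (n'-k) b / f0 b < 0" using fa by (simp only: divide_neg_pos)
      qed
    qed
  qed
  show ?thesis using part1 part2 by blast
qed

end
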